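(* Let $W$ be a non-negative symmetric $n\times n$ matrix with zero diagonal. Then \begin{enumerate} \item $\mathcal D(W)$ consists of exactly one matrix $D^*$; \item $\mathcal P(W)=\{P\in\mathcal P: P(W-D^* )=0\}$. \end{enumerate}
   Context: $\mathcal P=\{P\in M_n(\mathbb R): P\succeq0,\ P_{ii}=1\ \forall i\}$. For matrices, $P\circ W=\sum_{i,j}P_{ij}W_{ij}$. $\mathcal P(W)$ is the set of optimal solutions of the SDP: minimize $P\circ W$ subject to $P\in\mathcal P$. $\mathcal D(W)$ is the set of optimal solutions of its dual: maximize $\sum_iD_{ii}$ subject to $D$ diagonal and $W-D\succeq0$. Here $A\succeq0$ means $A$ is positive semidefinite. *)

theory Defs
  imports "HOL-Analysis.Analysis"
begin

text \<open>Real n x n matrices are represented as real^'n^'n, the dimension n being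
  the cardinality of the finite index type 'n.\<close>

definition psd :: "real^'n^'n \<Rightarrow> bool" where
  "psd A \<longleftrightarrow> transpose A = A \<and> (\<forall>x. 0 \<le> x \<bullet> (A *v x))"

definition frob :: "real^'n^'n \<Rightarrow> real^'n^'n \<Rightarrow> real" where
  "frob P W = (\<Sum>i\<in>UNIV. \<Sum>j\<in>UNIV. P$i$j * W$i$j)"

definition is_diag :: "real^'n^'n \<Rightarrow> bool" where
  "is_diag D \<longleftrightarrow> (\<forall>i j. i \<noteq> j \<longrightarrow> D$i$j = 0)"

definition Pset :: "(real^'n^'n) set" where
  "Pset = {P. psd P \<and> (\<forall>i. P$i$i = 1)}"

definition Popt :: "real^'n^'n \<Rightarrow> (real^'n^'n) set" where
  "Popt W = {P \<in> Pset. \<forall>Q\<in>Pset. frob P W \<le> frob Q W}"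

definition Dopt :: "real^'n^'n \<Rightarrow> (real^'n^'n) set" where
  "Dopt W = {D. is_diag D \<and> psd (W - D) \<and>
     (\<forall>D'. is_diag D' \<and> psd (W - D') \<longrightarrow> (\<Sum>i\<in>UNIV. D'$i$i) \<le> (\<Sum>i\<in>UNIV. D$i$i))}"

end

theory Submission
  imports Defs
begin


definition qf :: "real^'n^'n \<Rightarrow> real^'n \<Rightarrow> real^'n \<Rightarrow> real" where
  "qf A x y = (\<Sum>i\<in>UNIV. \<Sum>j\<in>UNIV. x$i * A$i$j * y$j)"

lemma inner_mv_qf: "x \<bullet> (A *v y) = qf A x y"
  by (simp add: qf_def inner_vec_def matrix_vector_mult_def sum_distrib_left mult.assoc)

definition symm :: "real^'n^'n \<Rightarrow> bool" where
  "symm A \<longleftrightarrow> (\<forall>i j. A$i$j = A$j$i)"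

lemma transpose_eq_symm: "transpose A = A \<longleftrightarrow> symm A"
  by (auto simp: transpose_def symm_def vec_eq_iff)

lemma psd_iff: "psd A \<longleftrightarrow> symm A \<and> (\<forall>x. 0 \<le> qf A x x)"
  by (simp add: psd_def transpose_eq_symm inner_mv_qf)

lemma qf_add1: "qf A (x + y) z = qf A x z + qf A y z"
  by (simp add: qf_def algebra_simps sum.distrib)
lemma qf_add2: "qf A x (y + z) = qf A x y + qf A x z"
  by (simp add: qf_def algebra_simps sum.distrib)
lemma qf_scale1: "qf A (c *\<^sub>R x) z = c * qf A x z"
  by (simp add: qf_def algebra_simps sum_distrib_left)
lemma qf_scale2: "qf A x (c *\<^sub>R z) = c * qf A x z"
  by (simp add: qf_def algebra_simps sum_distrib_left)
lemma qf_symm: "symm A \<Longrightarrow> qf A x y = qf A y x"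
  unfolding qf_def symm_def
  by (subst sum.swap) (simp add: mult.commute mult.left_commute)
lemma qf_matadd: "qf (A + B) x y = qf A x y + qf B x y"
  by (simp add: qf_def algebra_simps sum.distrib)
lemma qf_matdiff: "qf (A - B) x y = qf A x y - qf B x y"
  by (simp add: qf_def algebra_simps sum_subtractf)
lemma qf_matscale: "qf (c *\<^sub>R A) x y = c * qf A x y"
  by (simp add: qf_def algebra_simps sum_distrib_left)

lemma qf_expand:
  assumes "symm A"
  shows "qf A (x + t *\<^sub>R y) (x + t *\<^sub>R y) = qf A x x + 2 * t * qf A y x + t^2 * qf A y y"
  using qf_symm[OF assms, of x y]
  by (simp add: qf_add1 qf_add2 qf_scale1 qf_scale2 power2_eq_square algebra_simps)

lemma qf_mv: "qf A y x = y \<bullet> (A *v x)" by (simp add: inner_mv_qf)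

lemma psd_zero:
  assumes "psd A" and "qf A x x = 0"
  shows "A *v x = 0"
proof -
  have S: "symm A" and P: "\<And>z. 0 \<le> qf A z z" using assms(1) by (auto simp: psd_iff)
  define y where "y = A *v x"
  define c where "c = y \<bullet> y"
  define d where "d = qf A y y"
  have c: "qf A y x = c" by (simp add: qf_mv c_def y_def)
  have d0: "0 \<le> d" using P d_def by auto
  define t where "t = - c / (d + 1)"
  have "0 \<le> qf A (x + t *\<^sub>R y) (x + t *\<^sub>R y)" by (rule P)
  also have "\<dots> = 2 * t * c + t^2 * d" using qf_expand[OF S] assms(2) c d_def by simp
  finally have h: "0 \<le> 2 * t * c + t^2 * d" .
  have c0: "0 \<le> c" by (simp add: c_def)
  have "(d+1)^2 * (2 * t * c + t^2 * d) = - (c^2 * (d + 2))"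
  proof -
    have ht: "t * (d+1) = - c" using d0 by (simp add: t_def)
    have "(d+1)^2 * (2 * t * c + t^2 * d) = 2 * c * (t * (d+1)) * (d+1) + (t*(d+1))^2 * d"
      by (simp add: power2_eq_square algebra_simps)
    also have "\<dots> = - (c^2 * (d + 2))" unfolding ht by (simp add: power2_eq_square algebra_simps)
    finally show ?thesis .
  qed
  moreover have "0 \<le> (d+1)^2 * (2 * t * c + t^2 * d)" using h by simp
  ultimately have "c^2 * (d+2) \<le> 0" by linarith
  hence "c = 0" using d0 by (smt (verit) mult_pos_pos zero_less_power2)
  thus ?thesis by (simp add: c_def y_def)
qed

lemma mv_axis: "(A *v axis j 1) $ i = A$i$j"
  by (simp add: matrix_vector_mult_def axis_def if_distrib cong: if_cong)

lemma qf_axis_left: "qf A (axis i 1) x = (\<Sum>k\<in>UNIV. A$i$k * x$k)"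
proof -
  have "qf A (axis i 1) x = (\<Sum>ia\<in>UNIV. if ia = i then (\<Sum>k\<in>UNIV. A$ia$k * x$k) else 0)"
    unfolding qf_def by (rule sum.cong) (auto simp: axis_def)
  thus ?thesis by simp
qed

lemma qf_axis: "qf A (axis i 1) (axis j 1) = A$i$j"
proof -
  have "qf A (axis i 1) (axis j 1) = (\<Sum>k\<in>UNIV. if k = j then A$i$k else 0)"
    unfolding qf_axis_left by (rule sum.cong) (auto simp: axis_def)
  thus ?thesis by simp
qed

lemma psd_diag_nonneg: "psd A \<Longrightarrow> 0 \<le> A$i$i"
  using qf_axis[of A i i] by (metis psd_iff)

lemma psd_diag_zero: "psd A \<Longrightarrow> A$j$j = 0 \<Longrightarrow> A$i$j = 0"
  using psd_zero[of A "axis j 1"] qf_axis[of A j j] mv_axis[of A j i] by simp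

lemma psd_diag_zero': "psd A \<Longrightarrow> A$j$j = 0 \<Longrightarrow> A$j$i = 0"
  using psd_diag_zero[of A j i] by (auto simp: psd_iff symm_def)

lemma mat_add_rdistrib: "(A + B) ** (C::real^'n^'n) = A ** C + B ** C"
  by (simp add: matrix_matrix_mult_def vec_eq_iff algebra_simps sum.distrib)

lemma frob_add: "frob (A + B) M = frob A M + frob B M"
  by (simp add: frob_def algebra_simps sum.distrib)
lemma frob_diff: "frob (A - B) M = frob A M - frob B M"
  by (simp add: frob_def algebra_simps sum_subtractf)
lemma frob_diff2: "frob A (M - N) = frob A M - frob A N"
  by (simp add: frob_def algebra_simps sum_subtractf)
lemma frob_add2: "frob A (M + N) = frob A M + frob A N"
  by (simp add: frob_def algebra_simps sum.distrib)

lemma frob_psd: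
  fixes M :: "real^'n^'n"
  assumes M: "psd M"
  shows "psd P \<Longrightarrow> 0 \<le> frob P M \<and> (frob P M = 0 \<longrightarrow> P ** M = 0)"
proof (induction "card {i. P$i$i \<noteq> 0}" arbitrary: P rule: less_induct)
  case less
  have SP: "symm P" using less.prems by (simp add: psd_iff)
  show ?case
  proof (cases "\<forall>i. P$i$i = 0")
    case True
    have "P = 0" using psd_diag_zero[OF less.prems] True by (simp add: vec_eq_iff)
    thus ?thesis by (simp add: frob_def)
  next
    case False
    then obtain i where ai: "P$i$i \<noteq> 0" by auto
    define a where "a = P$i$i"
    have a0: "0 < a" using psd_diag_nonneg[OF less.prems, of i] ai a_def by simp
    define v where "v = (\<chi> j. P$j$i)"
    define R :: "real^'n^'n" where "R = (\<chi> j k. v$j * v$k / a)"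
    define P' where "P' = P - R"
    have symmP': "symm P'" using SP by (simp add: P'_def R_def symm_def mult.commute)
    have qfP': "0 \<le> qf P' x x" for x
    proof -
      define b where "b = qf P (axis i 1) x"
      have b: "b = (\<Sum>k\<in>UNIV. v$k * x$k)"
        using SP by (simp add: b_def qf_axis_left v_def symm_def)
      have qR: "qf R x x = b^2 / a"
        unfolding b qf_def R_def power2_eq_square
        by (simp add: sum_divide_distrib sum_distrib_left sum_distrib_right mult.commute mult.left_commute)
      define t where "t = - b / a"
      have "0 \<le> qf P (x + t *\<^sub>R axis i 1) (x + t *\<^sub>R axis i 1)"
        using less.prems by (simp add: psd_iff)
      also have "\<dots> = qf P x x + 2 * t * b + t^2 * a"
        using qf_expand[OF SP] qf_axis[of P i i] qf_symm[OF SP, of "axis i 1" x]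
        by (simp add: b_def a_def)
      also have "\<dots> = qf P x x - b^2 / a"
        using a0 by (simp add: t_def power2_eq_square field_simps)
      finally show ?thesis by (simp add: P'_def qf_matdiff qR)
    qed
    have psdP': "psd P'" using symmP' qfP' by (simp add: psd_iff)
    have sub: "{j. P'$j$j \<noteq> 0} \<subset> {j. P$j$j \<noteq> 0}"
    proof -
      have "P'$i$i = 0" using a0 by (simp add: P'_def R_def v_def a_def power2_eq_square)
      moreover have "P'$j$j = 0" if "P$j$j = 0" for j
        using psd_diag_zero'[OF less.prems that, of i] that by (simp add: P'_def R_def v_def)
      ultimately show ?thesis using ai by auto
    qed
    have IH: "0 \<le> frob P' M \<and> (frob P' M = 0 \<longrightarrow> P' ** M = 0)"
      by (rule less.hyps[OF psubset_card_mono[OF _ sub] psdP']) simp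
    have fR: "frob R M = qf M v v / a"
      by (simp add: frob_def qf_def R_def sum_divide_distrib mult.commute mult.left_commute)
    have qM: "0 \<le> qf M v v" using M by (simp add: psd_iff)
    have PP: "P = P' + R" by (simp add: P'_def)
    have fP: "frob P M = frob P' M + qf M v v / a" using PP fR frob_add by metis
    have ge: "0 \<le> frob P M" using fP IH qM a0 by simp
    moreover have "P ** M = 0" if z: "frob P M = 0"
    proof -
      have q0: "0 \<le> qf M v v / a" using qM a0 by simp
      have "frob P' M = 0" "qf M v v / a = 0" using fP IH q0 z by linarith+
      hence "frob P' M = 0" "qf M v v = 0" using a0 by auto
      hence 1: "P' ** M = 0" and 2: "M *v v = 0" using IH psd_zero[OF M] by auto
      have "R ** M = 0"
      proof -
        have "(R ** M)$j$k = 0" for j k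
        proof -
          have "(R ** M)$j$k = v$j / a * (\<Sum>l\<in>UNIV. M$k$l * v$l)"
            using M by (simp add: matrix_matrix_mult_def R_def sum_distrib_left psd_iff symm_def
                mult.commute mult.left_commute)
          also have "(\<Sum>l\<in>UNIV. M$k$l * v$l) = (M *v v)$k" by (simp add: matrix_vector_mult_def)
          finally show ?thesis using 2 by simp
        qed
        thus ?thesis by (simp add: vec_eq_iff)
      qed
      thus ?thesis using 1 PP by (simp add: mat_add_rdistrib)
    qed
    ultimately show ?thesis by blast
  qed
qed



lemma closed_psd_shift: "closed {D::real^'n^'n. psd (W - D)}"
proof -
  have "{D::real^'n^'n. psd (W - D)} = (\<Inter>i. \<Inter>j. {D. (W - D)$i$j = (W - D)$j$i}) \<inter> (\<Inter>x. {D. 0 \<le> qf (W - D) x x})"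
    by (auto simp: psd_iff symm_def)
  moreover have "closed \<dots>"
    unfolding qf_def
    by (intro closed_Int closed_INT closed_Collect_eq closed_Collect_le continuous_intros ballI)
  ultimately show ?thesis by simp
qed

lemma closed_psd: "closed {A::real^'n^'n. psd A}"
proof -
  have "{A::real^'n^'n. psd A} = (\<Inter>i. \<Inter>j. {A. A$i$j = A$j$i}) \<inter> (\<Inter>x. {A. 0 \<le> qf A x x})"
    by (auto simp: psd_iff symm_def)
  moreover have "closed \<dots>"
    unfolding qf_def
    by (intro closed_Int closed_INT closed_Collect_eq closed_Collect_le continuous_intros ballI)
  ultimately show ?thesis by simp
qed

lemma abs_prod_le: "\<bar>(a::real) * b\<bar> \<le> (a^2 + b^2)/2"
proof -
  have "0 \<le> (\<bar>a\<bar> - \<bar>b\<bar>)^2" by simp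
  hence "0 \<le> \<bar>a\<bar>^2 + \<bar>b\<bar>^2 - 2*\<bar>a\<bar>*\<bar>b\<bar>" by (simp add: power2_diff)
  thus ?thesis by (simp add: abs_mult)
qed

lemma closed_diag: "closed {D::real^'n^'n. is_diag D}"
proof -
  have "{D::real^'n^'n. is_diag D} = (\<Inter>i. \<Inter>j. {D. i \<noteq> j \<longrightarrow> D$i$j = 0})"
    by (auto simp: is_diag_def)
  moreover have "closed \<dots>"
  proof (intro closed_INT ballI)
    fix i j :: 'n
    show "closed {D::real^'n^'n. i \<noteq> j \<longrightarrow> D$i$j = 0}"
      by (cases "i = j") (auto intro!: closed_Collect_eq continuous_intros)
  qed
  ultimately show ?thesis by simp
qed

definition tr :: "real^'n^'n \<Rightarrow> real" where "tr D = (\<Sum>i\<in>UNIV. D$i$i)"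

lemma norm_mat_le: "norm (A::real^'n^'n) \<le> (\<Sum>i\<in>UNIV. \<Sum>j\<in>UNIV. \<bar>A$i$j\<bar>)"
proof -
  have "norm A \<le> (\<Sum>i\<in>UNIV. norm (A$i))"
    unfolding norm_vec_def[of A] by (rule L2_set_le_sum) simp
  also have "\<dots> \<le> (\<Sum>i\<in>UNIV. \<Sum>j\<in>UNIV. \<bar>A$i$j\<bar>)"
    by (intro sum_mono norm_le_l1_cart)
  finally show ?thesis .
qed

lemma norm_mat_bound: "(\<And>i j. \<bar>(A::real^'n^'n)$i$j\<bar> \<le> B) \<Longrightarrow> norm A \<le> real CARD('n) * (real CARD('n) * B)"
proof -
  assume h: "\<And>i j. \<bar>A$i$j\<bar> \<le> B"
  have "(\<Sum>i\<in>UNIV. \<Sum>j\<in>UNIV. \<bar>A$i$j\<bar>) \<le> (\<Sum>i\<in>(UNIV::'n set). \<Sum>j\<in>(UNIV::'n set). B)"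
    by (intro sum_mono h)
  thus ?thesis using norm_mat_le[of A] by simp
qed

lemma qf_lower:
  fixes W :: "real^'n^'n"
  shows "qf W x x \<ge> - (\<Sum>i\<in>UNIV. \<Sum>j\<in>UNIV. \<bar>W$i$j\<bar>) * (\<Sum>k\<in>UNIV. x$k^2)"
proof -
  let ?S = "\<Sum>k\<in>UNIV. x$k^2"
  have xi: "x$i^2 \<le> ?S" for i by (rule member_le_sum) auto
  have "x$i * W$i$j * x$j \<ge> - \<bar>W$i$j\<bar> * ?S" for i j
  proof -
    have "\<bar>x$i * x$j\<bar> \<le> (x$i^2 + x$j^2)/2" by (rule abs_prod_le)
    also have "\<dots> \<le> ?S" using xi[of i] xi[of j] by simp
    finally have h: "\<bar>x$i * x$j\<bar> \<le> ?S" .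
    have "- (x$i * W$i$j * x$j) \<le> \<bar>W$i$j\<bar> * \<bar>x$i * x$j\<bar>"
    proof -
      have "\<bar>x$i * W$i$j * x$j\<bar> = \<bar>W$i$j\<bar> * \<bar>x$i * x$j\<bar>" by (simp add: abs_mult)
      thus ?thesis by linarith
    qed
    also have "\<dots> \<le> \<bar>W$i$j\<bar> * ?S" using h by (simp add: mult_left_mono)
    finally show ?thesis by simp
  qed
  hence "(\<Sum>i\<in>UNIV. \<Sum>j\<in>UNIV. - \<bar>W$i$j\<bar> * ?S) \<le> qf W x x"
    unfolding qf_def by (intro sum_mono) auto
  thus ?thesis by (simp add: sum_distrib_right sum_negf)
qed
lemma continuous_tr: "continuous_on S tr"
  unfolding tr_def by (intro continuous_intros)

lemma dual_exists:
  fixes W :: "real^'n^'n"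
  assumes SW: "symm W" and W0: "\<forall>i. W$i$i = 0"
  shows "\<exists>D. D \<in> Dopt W"
proof -
  define c where "c = (\<Sum>i\<in>UNIV. \<Sum>j\<in>UNIV. \<bar>W$i$j\<bar>)"
  define D0 :: "real^'n^'n" where "D0 = (\<chi> i j. if i = j then -c else 0)"
  have qD0: "qf D0 x x = - c * (\<Sum>k\<in>UNIV. x$k^2)" for x
  proof -
    have "(\<Sum>j\<in>UNIV. x$i * D0$i$j * x$j) = - c * x$i^2" for i
    proof -
      have "(\<Sum>j\<in>UNIV. x$i * D0$i$j * x$j) = (\<Sum>j\<in>UNIV. if j = i then - c * x$i^2 else 0)"
        by (rule sum.cong) (auto simp: D0_def power2_eq_square)
      thus ?thesis by simp
    qed
    thus ?thesis by (simp add: qf_def sum_distrib_left)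
  qed
  have diag0: "is_diag D0" by (simp add: is_diag_def D0_def)
  have psd0: "psd (W - D0)"
  proof -
    have "symm (W - D0)" using SW by (simp add: symm_def D0_def)
    moreover have "0 \<le> qf (W - D0) x x" for x
      using qf_lower[of W x] qD0[of x] by (simp add: qf_matdiff c_def)
    ultimately show ?thesis by (simp add: psd_iff)
  qed
  define F where "F = {D. is_diag D \<and> psd (W - D)}"
  define F' where "F' = F \<inter> {D. tr D0 \<le> tr D}"
  have D0F: "D0 \<in> F'" using diag0 psd0 by (simp add: F'_def F_def)
  have closedF': "closed F'"
  proof -
    have "F = {D. is_diag D} \<inter> {D. psd (W - D)}" by (auto simp: F_def)
    hence "closed F" using closed_Int[OF closed_diag closed_psd_shift[of W]] by simp
    moreover have "closed {D::real^'n^'n. tr D0 \<le> tr D}"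
      by (intro closed_Collect_le continuous_intros continuous_tr)
    ultimately show ?thesis by (simp add: F'_def closed_Int)
  qed
  have boundedF': "bounded F'"
  proof -
    have "norm D \<le> real CARD('n) * (real CARD('n) * \<bar>tr D0\<bar>)" if D: "D \<in> F'" for D
    proof (rule norm_mat_bound)
      fix i j
      have dg: "is_diag D" and ps: "psd (W - D)" and tt: "tr D0 \<le> tr D" using D by (auto simp: F'_def F_def)
      have neg: "D$k$k \<le> 0" for k using psd_diag_nonneg[OF ps, of k] W0 by simp
      have "tr D = D$i$i + (\<Sum>k\<in>UNIV-{i}. D$k$k)" unfolding tr_def
        by (simp add: sum.remove[of UNIV i])
      moreover have "(\<Sum>k\<in>UNIV-{i}. D$k$k) \<le> 0" using neg by (simp add: sum_nonpos)
      ultimately have "tr D0 \<le> D$i$i" using tt by linarith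
      hence "\<bar>D$i$i\<bar> \<le> \<bar>tr D0\<bar>" using neg[of i] by linarith
      thus "\<bar>D$i$j\<bar> \<le> \<bar>tr D0\<bar>" using dg by (cases "i = j") (auto simp: is_diag_def)
    qed
    thus ?thesis by (auto simp: bounded_iff)
  qed
  have "compact F'" using closedF' boundedF' by (simp add: compact_eq_bounded_closed)
  then obtain Ds where Ds: "Ds \<in> F'" and mx: "\<forall>y\<in>F'. tr y \<le> tr Ds"
    using continuous_attains_sup[of F' tr] D0F continuous_tr by blast
  have "Ds \<in> Dopt W"
    unfolding Dopt_def
  proof (intro CollectI conjI allI impI)
    show "is_diag Ds" "psd (W - Ds)" using Ds by (auto simp: F'_def F_def)
    fix D' assume D': "is_diag D' \<and> psd (W - D')"
    show "(\<Sum>i\<in>UNIV. D'$i$i) \<le> (\<Sum>i\<in>UNIV. Ds$i$i)"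
    proof (cases "tr D0 \<le> tr D'")
      case True thus ?thesis using D' mx by (auto simp: F'_def F_def tr_def)
    next
      case False thus ?thesis using mx D0F by (auto simp: tr_def)
    qed
  qed
  thus ?thesis by blast
qed



lemma mat_scale_mult: "(c *\<^sub>R A) ** (B::real^'n^'n) = c *\<^sub>R (A ** B)"
  by (simp add: matrix_matrix_mult_def vec_eq_iff sum_distrib_left mult.assoc)

lemma psd_offdiag:
  assumes "psd X" shows "2 * \<bar>X$i$j\<bar> \<le> X$i$i + X$j$j"
proof -
  have S: "symm X" and P: "\<And>z. 0 \<le> qf X z z" using assms by (auto simp: psd_iff)
  have e: "qf X (axis i 1 + s *\<^sub>R axis j 1) (axis i 1 + s *\<^sub>R axis j 1) = X$i$i + 2 * s * X$i$j + s^2 * X$j$j" for s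
    using qf_expand[OF S, of "axis i 1" s "axis j 1"] qf_axis[of X] S by (simp add: symm_def)
  have "0 \<le> X$i$i + 2 * 1 * X$i$j + 1^2 * X$j$j" using P e[of 1] by metis
  moreover have "0 \<le> X$i$i + 2 * (-1) * X$i$j + (-1)^2 * X$j$j" using P e[of "-1"] by metis
  ultimately show ?thesis by (simp add: abs_if)
qed

lemma closed_mult0: "closed {X::real^'n^'n. X ** M = 0}"
proof -
  have "{X::real^'n^'n. X ** M = 0} = (\<Inter>i. \<Inter>j. {X. (\<Sum>k\<in>UNIV. X$i$k * M$k$j) = 0})"
    by (auto simp: matrix_matrix_mult_def vec_eq_iff)
  moreover have "closed \<dots>"
    by (intro closed_INT closed_Collect_eq continuous_intros ballI)
  ultimately show ?thesis by simp
qed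

lemma convex_psd_combo:
  assumes "psd X" "psd Y" "0 \<le> u" "0 \<le> v"
  shows "psd (u *\<^sub>R X + v *\<^sub>R Y)"
  using assms by (auto simp: psd_iff symm_def qf_matadd qf_matscale)

definition dg :: "real^'n^'n \<Rightarrow> real^'n" where "dg X = (\<chi> i. X$i$i)"

lemma linear_dg: "linear dg"
  by (rule linearI) (simp_all add: dg_def vec_eq_iff)

lemma tr_add: "tr (A + B) = tr A + tr B" by (simp add: tr_def sum.distrib)
lemma tr_scale: "tr (c *\<^sub>R A) = c * tr A" by (simp add: tr_def sum_distrib_left)

lemma primal_exists:
  fixes W :: "real^'n^'n"
  assumes Ds: "Ds \<in> Dopt W"
  shows "\<exists>P\<in>Pset. P ** (W - Ds) = 0"
proof (rule ccontr)
  assume nP: "\<not> (\<exists>P\<in>Pset. P ** (W - Ds) = 0)"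
  define M where "M = W - Ds"
  have dgDs: "is_diag Ds" and psdM: "psd M" using Ds by (auto simp: Dopt_def M_def)
  have SM: "symm M" using psdM by (simp add: psd_iff)
  have opt: "\<And>D'. is_diag D' \<Longrightarrow> psd (W - D') \<Longrightarrow> tr D' \<le> tr Ds"
    using Ds by (auto simp: Dopt_def tr_def)
  define n where "n = real CARD('n)"
  have n0: "0 < n" by (simp add: n_def)
  define K where "K = {X::real^'n^'n. psd X \<and> X ** M = 0 \<and> tr X = n}"
  define T where "T = dg ` K"
  define one :: "real^'n" where "one = (\<chi> i. 1)"
  have notin: "one \<notin> T"
  proof
    assume "one \<in> T"
    then obtain X where X: "X \<in> K" "dg X = one" by (auto simp: T_def)
    hence "X \<in> Pset" "X ** M = 0" by (auto simp: K_def Pset_def dg_def one_def vec_eq_iff)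
    thus False using nP by (auto simp: M_def)
  qed
  have closedK: "closed K"
  proof -
    have "K = {X. psd X} \<inter> {X. X ** M = 0} \<inter> {X. tr X = n}" by (auto simp: K_def)
    moreover have "closed {X::real^'n^'n. tr X = n}"
      by (intro closed_Collect_eq continuous_intros continuous_tr)
    ultimately show ?thesis using closed_Int[OF closed_Int[OF closed_psd closed_mult0[of M]]] by metis
  qed
  have boundedK: "bounded K"
  proof -
    have "norm X \<le> real CARD('n) * (real CARD('n) * n)" if X: "X \<in> K" for X
    proof (rule norm_mat_bound)
      fix i j
      have ps: "psd X" and tX: "tr X = n" using X by (auto simp: K_def)
      have nn: "0 \<le> X$k$k" for k using psd_diag_nonneg[OF ps] .
      have le: "X$k$k \<le> n" for k
      proof -
        have "X$k$k \<le> (\<Sum>l\<in>UNIV. X$l$l)" by (rule member_le_sum) (auto simp: nn)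
        thus ?thesis using tX by (simp add: tr_def)
      qed
      show "\<bar>X$i$j\<bar> \<le> n" using psd_offdiag[OF ps, of i j] le[of i] le[of j] by linarith
    qed
    thus ?thesis by (auto simp: bounded_iff)
  qed
  have convexK: "convex K"
  proof (rule convexI)
    fix X Y :: "real^'n^'n" and u v :: real
    assume X: "X \<in> K" and Y: "Y \<in> K" and "0 \<le> u" "0 \<le> v" "u + v = 1"
    hence uv: "0 \<le> u \<and> 0 \<le> v \<and> u + v = 1" by simp
    have "psd (u *\<^sub>R X + v *\<^sub>R Y)" using X Y uv convex_psd_combo by (auto simp: K_def)
    moreover have "(u *\<^sub>R X + v *\<^sub>R Y) ** M = 0"
      using X Y by (simp add: K_def mat_add_rdistrib mat_scale_mult)
    moreover have "tr (u *\<^sub>R X + v *\<^sub>R Y) = n"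
    proof -
      have "tr (u *\<^sub>R X + v *\<^sub>R Y) = u * n + v * n" using X Y by (simp add: K_def tr_add tr_scale)
      also have "\<dots> = (u + v) * n" by (simp add: algebra_simps)
      also have "\<dots> = n" using uv by simp
      finally show ?thesis .
    qed
    ultimately show "u *\<^sub>R X + v *\<^sub>R Y \<in> K" by (simp add: K_def)
  qed
  have compactT: "compact T"
  proof -
    have "compact K" using closedK boundedK by (simp add: compact_eq_bounded_closed)
    moreover have "continuous_on K dg"
      using linear_dg by (intro linear_continuous_on) (simp add: linear_conv_bounded_linear)
    ultimately show ?thesis unfolding T_def by (rule compact_continuous_image[rotated])
  qed
  have convexT: "convex T" unfolding T_def by (rule convex_linear_image[OF linear_dg convexK])
  obtain a b where ab1: "inner a one < b" and ab2: "\<forall>t\<in>T. b < inner a t"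
    using separating_hyperplane_closed_point[OF convexT compact_imp_closed[OF compactT] notin] by blast
  define y :: "real^'n" where "y = (\<chi> i. b / n - a$i)"
  have ypos: "0 < (\<Sum>i\<in>UNIV. y$i)"
  proof -
    have "(\<Sum>i\<in>UNIV. y$i) = n * (b / n) - inner a one"
      by (simp add: y_def sum_subtractf inner_vec_def one_def n_def)
    also have "\<dots> = b - inner a one" using n0 by simp
    finally show ?thesis using ab1 by simp
  qed
  have yK: "(\<Sum>i\<in>UNIV. y$i * X$i$i) < 0" if X: "X \<in> K" for X
  proof -
    have "(\<Sum>i\<in>UNIV. y$i * X$i$i) = b / n * tr X - inner a (dg X)"
      by (simp add: y_def tr_def dg_def inner_vec_def left_diff_distrib sum_subtractf sum_distrib_left)
    also have "\<dots> = b - inner a (dg X)" using X n0 by (simp add: K_def)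
    finally show ?thesis using ab2 X by (auto simp: T_def)
  qed
  define g where "g = (\<lambda>x::real^'n. \<Sum>i\<in>UNIV. y$i * x$i^2)"
  have gneg: "g x < 0" if Mx: "M *v x = 0" and x0: "x \<noteq> 0" for x
  proof -
    define S where "S = (\<Sum>k\<in>UNIV. x$k^2)"
    have "S = x \<bullet> x" by (simp add: S_def inner_vec_def power2_eq_square)
    hence S0: "0 < S" using x0 by simp
    define s where "s = n / S"
    have s0: "0 < s" using S0 n0 by (simp add: s_def)
    define X :: "real^'n^'n" where "X = (\<chi> i j. s * x$i * x$j)"
    have psdX: "psd X"
    proof -
      have "qf X z z = s * (\<Sum>i\<in>UNIV. z$i * x$i)^2" for z
        by (simp add: qf_def X_def power2_eq_square sum_distrib_left sum_distrib_right mult.commute mult.left_commute)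
      hence "0 \<le> qf X z z" for z using s0 by simp
      moreover have "symm X" by (simp add: symm_def X_def mult.commute mult.left_commute)
      ultimately show ?thesis by (simp add: psd_iff)
    qed
    have XM: "X ** M = 0"
    proof -
      have "(X ** M)$i$j = s * x$i * (M *v x)$j" for i j
        using SM by (simp add: matrix_matrix_mult_def matrix_vector_mult_def X_def sum_distrib_left symm_def
            mult.commute mult.left_commute)
      thus ?thesis using Mx by (simp add: vec_eq_iff)
    qed
    have "tr X = s * S" by (simp add: tr_def X_def S_def sum_distrib_left power2_eq_square mult.assoc)
    hence trX: "tr X = n" using S0 by (simp add: s_def)
    have "X \<in> K" using psdX XM trX by (simp add: K_def)
    hence "(\<Sum>i\<in>UNIV. y$i * X$i$i) < 0" by (rule yK)
    moreover have "(\<Sum>i\<in>UNIV. y$i * X$i$i) = s * g x"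
      by (simp add: g_def X_def sum_distrib_left power2_eq_square mult.commute mult.left_commute)
    ultimately show ?thesis using s0 by (simp add: mult_less_0_iff)
  qed
  define Y :: "real^'n^'n" where "Y = (\<chi> i j. if i = j then y$i else 0)"
  have qY: "qf Y x x = g x" for x
  proof -
    have "(\<Sum>j\<in>UNIV. x$i * Y$i$j * x$j) = y$i * x$i^2" for i
    proof -
      have "(\<Sum>j\<in>UNIV. x$i * Y$i$j * x$j) = (\<Sum>j\<in>UNIV. if j = i then y$i * x$i^2 else 0)"
        by (rule sum.cong) (auto simp: Y_def power2_eq_square)
      thus ?thesis by simp
    qed
    thus ?thesis by (simp add: qf_def g_def)
  qed
  have symY: "symm Y" by (simp add: symm_def Y_def)
  define f where "f = (\<lambda>x. qf M x x)"
  have fnn: "0 \<le> f x" for x using psdM by (simp add: f_def psd_iff)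
  define B where "B = (\<Sum>i\<in>UNIV. \<bar>y$i\<bar>) + 1"
  have B0: "0 < B" by (simp add: B_def add_nonneg_pos sum_nonneg)
  have gB: "g x \<le> B" if "norm x = 1" for x
  proof -
    have "y$i * x$i^2 \<le> \<bar>y$i\<bar>" for i
    proof -
      have "\<bar>x$i\<bar> \<le> 1" using component_le_norm_cart[of x i] that by simp
      hence "x$i^2 \<le> 1" by (simp add: abs_square_le_1)
      hence "\<bar>y$i\<bar> * x$i^2 \<le> \<bar>y$i\<bar>" by (simp add: mult_left_le)
      moreover have "y$i * x$i^2 \<le> \<bar>y$i\<bar> * x$i^2" by (simp add: mult_right_mono)
      ultimately show ?thesis by linarith
    qed
    hence "g x \<le> (\<Sum>i\<in>UNIV. \<bar>y$i\<bar>)" unfolding g_def by (intro sum_mono) auto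
    thus ?thesis by (simp add: B_def)
  qed
  have "\<exists>e>0. \<forall>x. norm x = 1 \<longrightarrow> e * g x \<le> f x"
  proof -
    define A where "A = sphere (0::real^'n) 1 \<inter> {x. 0 \<le> g x}"
    show ?thesis
    proof (cases "A = {}")
      case True
      have "g x \<le> f x" if "norm x = 1" for x
      proof -
        have "x \<notin> A" using True by simp
        hence "g x < 0" using that by (auto simp: A_def)
        thus ?thesis using fnn[of x] by simp
      qed
      thus ?thesis by (intro exI[of _ 1]) auto
    next
      case False
      have "compact A" unfolding A_def g_def
        by (intro compact_Int_closed compact_sphere closed_Collect_le continuous_intros)
      moreover have "continuous_on A f" unfolding f_def qf_def by (intro continuous_intros)
      ultimately obtain x0 where x0: "x0 \<in> A" and mn: "\<forall>x\<in>A. f x0 \<le> f x"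
        using continuous_attains_inf[of A f] False by blast
      have m0: "0 < f x0"
      proof (rule ccontr)
        assume "\<not> 0 < f x0"
        hence "f x0 = 0" using fnn[of x0] by simp
        hence "M *v x0 = 0" using psd_zero[OF psdM] by (simp add: f_def)
        moreover have "x0 \<noteq> 0" using x0 by (auto simp: A_def)
        ultimately have "g x0 < 0" by (rule gneg)
        thus False using x0 by (simp add: A_def)
      qed
      define e where "e = f x0 / B"
      have e0: "0 < e" using m0 B0 by (simp add: e_def)
      have "e * g x \<le> f x" if "norm x = 1" for x
      proof (cases "g x < 0")
        case True
        hence "e * g x < 0" using e0 by (simp add: mult_pos_neg)
        thus ?thesis using fnn[of x] by simp
      next
        case False
        hence "x \<in> A" using that by (simp add: A_def)
        hence "f x0 \<le> f x" using mn by simp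
        moreover have "e * g x \<le> e * B" using gB[OF that] e0 by simp
        moreover have "e * B = f x0" using B0 by (simp add: e_def)
        ultimately show ?thesis by linarith
      qed
      thus ?thesis using e0 by blast
    qed
  qed
  then obtain e where e0: "0 < e" and eu: "\<And>x. norm x = 1 \<Longrightarrow> e * g x \<le> f x" by blast
  have eall: "e * g x \<le> f x" for x
  proof (cases "x = 0")
    case True thus ?thesis by (simp add: g_def f_def qf_def)
  next
    case False
    define c where "c = 1 / norm x"
    have c0: "0 < c" using False by (simp add: c_def)
    have "norm (c *\<^sub>R x) = 1" using False by (simp add: c_def)
    hence "e * g (c *\<^sub>R x) \<le> f (c *\<^sub>R x)" by (rule eu)
    moreover have "g (c *\<^sub>R x) = c * c * g x" using qY[of "c *\<^sub>R x"] qY[of x]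
      by (simp add: qf_scale1 qf_scale2)
    moreover have "f (c *\<^sub>R x) = c * c * f x" by (simp add: f_def qf_scale1 qf_scale2)
    ultimately have "(c * c) * (e * g x) \<le> (c * c) * f x" by (simp add: algebra_simps)
    thus ?thesis using c0 by (simp add: mult_le_cancel_left)
  qed
  define D' where "D' = Ds + e *\<^sub>R Y"
  have "is_diag D'" using dgDs by (simp add: is_diag_def D'_def Y_def)
  moreover have "psd (W - D')"
  proof -
    have eq: "W - D' = M - e *\<^sub>R Y" by (simp add: D'_def M_def)
    have "symm (M - e *\<^sub>R Y)" using SM symY by (simp add: symm_def)
    moreover have "0 \<le> qf (M - e *\<^sub>R Y) x x" for x
      using eall[of x] qY[of x] by (simp add: qf_matdiff qf_matscale f_def)
    ultimately show ?thesis unfolding eq by (simp add: psd_iff)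
  qed
  ultimately have "tr D' \<le> tr Ds" by (rule opt)
  moreover have "tr D' = tr Ds + e * (\<Sum>i\<in>UNIV. y$i)"
    by (simp add: D'_def tr_def Y_def sum.distrib sum_distrib_left)
  ultimately show False using mult_pos_pos[OF e0 ypos] by linarith
qed




lemma frob_diag: "is_diag D \<Longrightarrow> frob P D = (\<Sum>i\<in>UNIV. P$i$i * D$i$i)"
proof -
  assume dg: "is_diag D"
  have "(\<Sum>j\<in>UNIV. P$i$j * D$i$j) = P$i$i * D$i$i" for i
  proof -
    have "(\<Sum>j\<in>UNIV. P$i$j * D$i$j) = (\<Sum>j\<in>UNIV. if j = i then P$i$i * D$i$i else 0)"
      by (rule sum.cong) (use dg in \<open>auto simp: is_diag_def\<close>)
    thus ?thesis by simp
  qed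
  thus ?thesis by (simp add: frob_def)
qed

lemma frob_Pset_diag: "P \<in> Pset \<Longrightarrow> is_diag D \<Longrightarrow> frob P D = tr D"
  by (simp add: frob_diag Pset_def tr_def)

lemma frob_symm: "symm M \<Longrightarrow> frob P M = (\<Sum>i\<in>UNIV. (P ** M)$i$i)"
  by (simp add: frob_def matrix_matrix_mult_def symm_def)

lemma mat_diff_ldistrib: "(A::real^'n^'n) ** (B - C) = A ** B - A ** C"
  by (simp add: matrix_matrix_mult_def vec_eq_iff algebra_simps sum_subtractf)

lemma mult_diag_entry: "is_diag D \<Longrightarrow> (P ** D)$i$i = P$i$i * D$i$i"
proof -
  assume dg: "is_diag D"
  have "(P ** D)$i$i = (\<Sum>k\<in>UNIV. P$i$k * D$k$i)" by (simp add: matrix_matrix_mult_def)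
  also have "\<dots> = (\<Sum>k\<in>UNIV. if k = i then P$i$i * D$i$i else 0)"
    by (rule sum.cong) (use dg in \<open>auto simp: is_diag_def\<close>)
  finally have "(P ** D)$i$i = (\<Sum>k\<in>UNIV. if k = i then P$i$i * D$i$i else 0)" .
  thus ?thesis by simp
qed

theorem theorem6:
  fixes W :: "real^'n^'n"
  assumes "\<forall>i j. 0 \<le> W$i$j"
    and "transpose W = W"
    and "\<forall>i. W$i$i = 0"
  shows "\<exists>Dstar. Dopt W = {Dstar} \<and> Popt W = {P \<in> Pset. P ** (W - Dstar) = 0}"
proof -
  have SW: "symm W" using assms(2) by (simp add: transpose_eq_symm)
  obtain Ds where Ds: "Ds \<in> Dopt W" using dual_exists[OF SW assms(3)] by blast
  obtain Ps where Ps: "Ps \<in> Pset" and PsM: "Ps ** (W - Ds) = 0" using primal_exists[OF Ds] by blast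
  define M where "M = W - Ds"
  have dgDs: "is_diag Ds" and psdM: "psd M" using Ds by (auto simp: Dopt_def M_def)
  have SM: "symm M" using psdM by (simp add: psd_iff)
  have optD: "\<And>D'. is_diag D' \<Longrightarrow> psd (W - D') \<Longrightarrow> tr D' \<le> tr Ds"
    using Ds by (auto simp: Dopt_def tr_def)
  have WMD: "W = M + Ds" by (simp add: M_def)
  have fW: "frob P W = frob P M + tr Ds" if "P \<in> Pset" for P
    using that dgDs by (metis WMD frob_add2 frob_Pset_diag)
  have fPs: "frob Ps W = tr Ds"
    using fW[OF Ps] frob_symm[OF SM, of Ps] PsM by (simp add: M_def)
  have uniq: "D' = Ds" if D': "D' \<in> Dopt W" for D'
  proof -
    have dg': "is_diag D'" and ps': "psd (W - D')" using D' by (auto simp: Dopt_def)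
    have "tr Ds \<le> tr D'" using D' dgDs psdM by (auto simp: Dopt_def tr_def M_def)
    moreover have "tr D' \<le> tr Ds" using optD dg' ps' by simp
    ultimately have eqtr: "tr D' = tr Ds" by simp
    have "frob Ps (W - D') = 0"
      using fPs eqtr frob_Pset_diag[OF Ps dg'] by (simp add: frob_diff2)
    hence z: "Ps ** (W - D') = 0" using frob_psd[OF ps' _] Ps by (auto simp: Pset_def)
    have "D'$i$i = Ds$i$i" for i
    proof -
      have "(Ps ** W)$i$i = (Ps ** D')$i$i" using z by (simp add: mat_diff_ldistrib vec_eq_iff)
      moreover have "(Ps ** W)$i$i = (Ps ** Ds)$i$i" using PsM by (simp add: mat_diff_ldistrib vec_eq_iff)
      ultimately show ?thesis using Ps mult_diag_entry[OF dg'] mult_diag_entry[OF dgDs]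
        by (simp add: Pset_def)
    qed
    thus ?thesis using dg' dgDs unfolding is_diag_def vec_eq_iff by metis
  qed
  have "Dopt W = {Ds}" using Ds uniq by blast
  moreover have "Popt W = {P \<in> Pset. P ** (W - Ds) = 0}"
  proof (intro set_eqI iffI)
    fix P assume P: "P \<in> Popt W"
    hence PP: "P \<in> Pset" and le: "frob P W \<le> frob Ps W" using Ps by (auto simp: Popt_def)
    have psP: "psd P" using PP by (simp add: Pset_def)
    have "frob P M \<le> 0" using le fW[OF PP] fPs by simp
    moreover have "0 \<le> frob P M" using frob_psd[OF psdM psP] by simp
    ultimately have "P ** M = 0" using frob_psd[OF psdM psP] by simp
    thus "P \<in> {P \<in> Pset. P ** (W - Ds) = 0}" using PP by (simp add: M_def)
  next
    fix P assume "P \<in> {P \<in> Pset. P ** (W - Ds) = 0}"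
    hence PP: "P \<in> Pset" and PM: "P ** M = 0" by (auto simp: M_def)
    have fP: "frob P W = tr Ds" using fW[OF PP] frob_symm[OF SM, of P] PM by simp
    have "frob P W \<le> frob Q W" if Q: "Q \<in> Pset" for Q
    proof -
      have "0 \<le> frob Q M" using frob_psd[OF psdM] Q by (simp add: Pset_def)
      thus ?thesis using fW[OF Q] fP by simp
    qed
    thus "P \<in> Popt W" using PP by (simp add: Popt_def)
  qed
  ultimately show ?thesis by blast
qed


end
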